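(* Let $\Phi$ be a positive, trace-preserving, unital (bistochastic) linear map on hermitian $2\times2$ matrices of the form $$\Phi\big(\tfrac12(x_0I+\vec x\cdot\vec\sigma)\big)=\tfrac12\big(x_0I+(\Lambda\vec x)\cdot\vec\sigma\big),\qquad \Lambda=\mathrm{diag}(\lambda_1,\lambda_2,\lambda_3).$$ Let $w=\max(\lambda_1^2,\lambda_2^2,\lambda_3^2)$. Then the concurrence of $\Phi$ at the state $\rho=\tfrac12(I+\vec x\cdot\vec\sigma)$ (with $x_0=1$) is $$C_\Phi(\rho)=\sqrt{(1-w)x_0^2+\sum_{i=1}^3(w-\lambda_i^2)x_i^2}.$$ This convex roof is flat.
   Context: States of a qubit are $\rho=\tfrac12(x_0I+\vec x\cdot\vec\sigma)$ with $x_0=1$ and $|\vec x|\le1$, where $\vec\sigma$ are the Pauli matrices. Pure states are those with $|\vec x|=1$. The concurrence of a positive trace-preserving map $\Phi$ is defined as follows. For a pure state $\pi$, $C_\Phi(\pi)=2\sqrt{\det\Phi(\pi)}$. For a general state, $C_\Phi(\rho)=\min\sum_j p_jC_\Phi(\pi_j)$, where the minimum is over all decompositions $\rho=\sum_j p_j\pi_j$ into pure states with $p_j>0$ and $\sum_j p_j=1$. A convex roof is flat if the Bloch ball is foliated into leaves, each the convex hull of pure states, on each of which the function is constant. *)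

theory Defs
  imports "HOL-Analysis.Analysis"
begin

type_synonym cmat = "complex^2^2"

definition pauli :: "3 \<Rightarrow> cmat" where
  "pauli k =
     (if k = 1 then (\<chi> i j. if i = j then 0 else 1)
      else if k = 2 then (\<chi> i j. if i = j then 0 else if i = 1 then - \<i> else \<i>)
      else (\<chi> i j. if i \<noteq> j then 0 else if i = 1 then 1 else -1))"

definition bloch :: "real \<Rightarrow> real^3 \<Rightarrow> cmat" where
  "bloch x0 x = (1/2) *\<^sub>R (x0 *\<^sub>R mat 1 + (\<Sum>k\<in>UNIV. (x $ k) *\<^sub>R pauli k))"

text \<open>The linear map Phi with Bloch matrix diag(lam): coordinates x0 = tr M, x_k = tr (M sigma_k).\<close>
definition phi :: "real^3 \<Rightarrow> cmat \<Rightarrow> cmat" where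
  "phi lam M = bloch (Re (trace M)) (\<chi> k. lam $ k * Re (trace (M ** pauli k)))"

definition hermitian :: "cmat \<Rightarrow> bool" where
  "hermitian M \<longleftrightarrow> (\<forall>i j. M $ i $ j = cnj (M $ j $ i))"

definition psd :: "cmat \<Rightarrow> bool" where
  "psd M \<longleftrightarrow> hermitian M \<and>
     (\<forall>v::complex^2. 0 \<le> Re (\<Sum>i\<in>UNIV. \<Sum>j\<in>UNIV. cnj (v $ i) * M $ i $ j * v $ j))"

definition positive_map :: "(cmat \<Rightarrow> cmat) \<Rightarrow> bool" where
  "positive_map \<Phi> \<longleftrightarrow> (\<forall>M. psd M \<longrightarrow> psd (\<Phi> M))"

definition qubit_states :: "cmat set" where
  "qubit_states = {bloch 1 x | x. norm x \<le> 1}"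

definition pure_states :: "cmat set" where
  "pure_states = {bloch 1 x | x. norm x = 1}"

definition conc_pure :: "(cmat \<Rightarrow> cmat) \<Rightarrow> cmat \<Rightarrow> real" where
  "conc_pure \<Phi> \<pi> = 2 * sqrt (Re (det (\<Phi> \<pi>)))"

definition conc_values :: "(cmat \<Rightarrow> cmat) \<Rightarrow> cmat \<Rightarrow> real set" where
  "conc_values \<Phi> \<rho> =
     {(\<Sum>j\<in>J. p j * conc_pure \<Phi> (\<pi> j)) | J p \<pi>.
        finite (J::nat set) \<and> J \<noteq> {} \<and> (\<forall>j\<in>J. 0 < p j \<and> \<pi> j \<in> pure_states) \<and>
        (\<Sum>j\<in>J. p j) = 1 \<and> \<rho> = (\<Sum>j\<in>J. p j *\<^sub>R \<pi> j)}"

text \<open>Concurrence: the minimum (infimum; attainment is stated separately) of conc_values.\<close>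
definition concurrence :: "(cmat \<Rightarrow> cmat) \<Rightarrow> cmat \<Rightarrow> real" where
  "concurrence \<Phi> \<rho> = Inf (conc_values \<Phi> \<rho>)"

definition flat_roof :: "(cmat \<Rightarrow> real) \<Rightarrow> bool" where
  "flat_roof f \<longleftrightarrow> (\<exists>F. \<Union>F = qubit_states \<and>
      (\<forall>A\<in>F. \<forall>B\<in>F. A \<noteq> B \<longrightarrow> A \<inter> B = {}) \<and>
      (\<forall>L\<in>F. (\<exists>P. P \<subseteq> pure_states \<and> L = convex hull P) \<and>
               (\<forall>\<rho>\<in>L. \<forall>\<sigma>\<in>L. f \<rho> = f \<sigma>)))"

end

theory Submission
  imports Defs
begin


lemma bloch_entries:
  "bloch x0 x $ 1 $ 1 = complex_of_real ((x0 + x$3)/2)"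
  "bloch x0 x $ 1 $ 2 = Complex (x$1/2) (- x$2/2)"
  "bloch x0 x $ 2 $ 1 = Complex (x$1/2) (x$2/2)"
  "bloch x0 x $ 2 $ 2 = complex_of_real ((x0 - x$3)/2)"
  by (simp_all add: bloch_def pauli_def sum_3 mat_def complex_eq_iff)

lemma form_bloch:
  "Re (\<Sum>i\<in>UNIV. \<Sum>j\<in>UNIV. cnj (v $ i) * bloch x0 z $ i $ j * v $ j) =
    (x0 + z$3)/2 * (Re (v$1)^2 + Im (v$1)^2) + (x0 - z$3)/2 * (Re (v$2)^2 + Im (v$2)^2)
    + z$1 * (Re (v$1) * Re (v$2) + Im (v$1) * Im (v$2))
    + z$2 * (Re (v$1) * Im (v$2) - Im (v$1) * Re (v$2))"
  by (simp add: sum_2 bloch_entries algebra_simps power2_eq_square add_divide_distrib diff_divide_distrib)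

lemma herm_bloch: "hermitian (bloch x0 z)"
  unfolding hermitian_def forall_2 by (simp add: bloch_entries complex_eq_iff)

lemma psd_axis: "psd (bloch 1 (axis i 1))"
proof -
  have "0 \<le> Re (\<Sum>i\<in>UNIV. \<Sum>j\<in>UNIV. cnj (v $ i) * bloch 1 (axis k 1) $ i $ j * v $ j)" for v k
  proof -
    have s: "0 \<le> ((a+c)^2 + (b+d)^2)/2" "0 \<le> ((a+d)^2 + (b-c)^2)/2" for a b c d :: real by auto
    have ax: "axis k (1::real) $ j = (if j = k then 1 else 0)" for j by (simp add: axis_def)
    show ?thesis using exhaust_3[of k]
    proof (elim disjE)
      assume "k = 1" then show ?thesis
        using s(1)[of "Re (v$1)" "Re (v$2)" "Im (v$1)" "Im (v$2)"]
        unfolding form_bloch by (simp add: axis_def power2_eq_square algebra_simps add_divide_distrib)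
    next
      assume "k = 2" then show ?thesis
        using s(2)[of "Re (v$1)" "Im (v$2)" "Im (v$1)" "Re (v$2)"]
        unfolding form_bloch by (simp add: axis_def power2_eq_square algebra_simps add_divide_distrib diff_divide_distrib)
    next
      assume "k = 3" then show ?thesis unfolding form_bloch by (simp add: axis_def)
    qed
  qed
  then show ?thesis by (simp add: psd_def herm_bloch)
qed

lemma psd_form:
  assumes "psd (bloch 1 z)"
  shows "0 \<le> (1+z$3)/2 + (1-z$3)/2*(c^2+d^2) + z$1 * c + z$2 * d" "0 \<le> 1 - z$3"
proof -
  have q: "0 \<le> Re (\<Sum>i\<in>UNIV. \<Sum>j\<in>UNIV. cnj (v $ i) * bloch 1 z $ i $ j * v $ j)" for v
    using assms by (simp add: psd_def)
  from q[of "\<chi> j. if j = 1 then 1 else Complex c d"]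
  show "0 \<le> (1+z$3)/2 + (1-z$3)/2*(c^2+d^2) + z$1 * c + z$2 * d"
    unfolding form_bloch by simp
  from q[of "\<chi> j. if j = 1 then 0 else 1"]
  show "0 \<le> 1 - z$3"
    unfolding form_bloch by simp
qed

lemma trace_bloch: "trace (bloch x0 x) = complex_of_real x0"
  by (simp add: trace_def sum_2 bloch_entries complex_eq_iff field_simps)

lemma trace_bloch_pauli: "trace (bloch x0 x ** pauli k) = complex_of_real (x$k)"
  using exhaust_3[of k]
  by (auto simp: trace_def sum_2 bloch_entries complex_eq_iff matrix_matrix_mult_def pauli_def field_simps)

lemma phi_bloch: "phi lam (bloch x0 x) = bloch x0 (\<chi> k. lam$k * x$k)"
  by (simp add: phi_def trace_bloch trace_bloch_pauli)

lemma det_bloch: "Re (det (bloch x0 x)) = (x0^2 - (x$1^2 + x$2^2 + x$3^2))/4"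
  by (simp add: det_2 bloch_entries power2_eq_square field_simps)

lemma bloch_eq_iff: "bloch x0 x = bloch y0 y \<longleftrightarrow> x0 = y0 \<and> x = y"
proof
  assume h: "bloch x0 x = bloch y0 y"
  have a: "bloch x0 x $ i $ j = bloch y0 y $ i $ j" for i j using h by simp
  from a[of 1 1] a[of 2 2] a[of 1 2] show "x0 = y0 \<and> x = y"
    by (auto simp: bloch_entries vec_eq_iff forall_3 complex_eq_iff)
qed simp

lemma bloch_comb2: "u *\<^sub>R bloch a y + v *\<^sub>R bloch b z = bloch (u * a + v * b) (u *\<^sub>R y + v *\<^sub>R z)"
  by (simp add: vec_eq_iff forall_2 bloch_entries complex_eq_iff field_simps)

lemma bloch_sum: "(\<Sum>j\<in>J. p j *\<^sub>R bloch (a j) (y j)) = bloch (\<Sum>j\<in>J. p j * a j) (\<Sum>j\<in>J. p j *\<^sub>R y j)"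
  by (simp add: vec_eq_iff forall_2 bloch_entries complex_eq_iff sum_component Re_sum Im_sum
      sum_divide_distrib[symmetric] sum.distrib[symmetric] sum_subtractf[symmetric] sum_negf algebra_simps)

lemma normsq: "norm (y::real^3)^2 = y$1^2 + y$2^2 + y$3^2"
  unfolding power2_norm_eq_inner by (simp add: inner_vec_def sum_3 power2_eq_square)

lemma normsq_sum: "norm (y::real^3)^2 = (\<Sum>i\<in>UNIV. (y$i)^2)"
  by (simp add: normsq sum_3)

lemma lam_le1:
  assumes "positive_map (phi lam)"
  shows "(lam$i)^2 \<le> 1"
proof -
  have "psd (phi lam (bloch 1 (axis i 1)))" using assms psd_axis by (simp add: positive_map_def)
  then have p: "psd (bloch 1 (\<chi> k. lam$k * axis i 1 $k))" by (simp add: phi_bloch)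
  note f = psd_form[OF p]
  have ax: "axis i (1::real) $ j = (if j = i then 1 else 0)" for j by (simp add: axis_def)
  have "-1 \<le> lam$i \<and> lam$i \<le> 1"
    using exhaust_3[of i]
  proof (elim disjE)
    assume "i = 1" then show ?thesis using f(1)[of 1 0] f(1)[of "-1" 0] by (simp add: axis_def)
  next
    assume "i = 2" then show ?thesis using f(1)[of 0 1] f(1)[of 0 "-1"] by (simp add: axis_def)
  next
    assume "i = 3" then show ?thesis using f(1)[of 0 0] f(2) by (simp add: axis_def)
  qed
  then show ?thesis by (simp add: abs_le_iff abs_square_le_1)
qed

definition Gf :: "real^3 \<Rightarrow> real \<Rightarrow> real^3 \<Rightarrow> real" where
  "Gf lam w y = sqrt ((1 - w) * 1^2 + (\<Sum>i\<in>UNIV. (w - (lam $ i)^2) * (y $ i)^2))"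

lemma conc_pure_eq:
  assumes "norm y = 1"
  shows "conc_pure (phi lam) (bloch 1 y) = Gf lam w y"
proof -
  have n: "y$1^2 + y$2^2 + y$3^2 = 1" using assms normsq[of y] by simp
  define A where "A = 1 - ((lam$1*y$1)^2 + (lam$2*y$2)^2 + (lam$3*y$3)^2)"
  have d: "Re (det (phi lam (bloch 1 y))) = A/4"
    by (simp add: phi_bloch det_bloch A_def)
  have e: "2 * sqrt (A/4) = sqrt A"
    by (simp add: real_sqrt_divide)
  have f: "(1 - w) * 1^2 + (\<Sum>i\<in>UNIV. (w - (lam $ i)^2) * (y $ i)^2) = A"
  proof -
    have "(1 - w) * 1^2 + (\<Sum>i\<in>UNIV. (w - (lam $ i)^2) * (y $ i)^2)
       = 1 - w + w * (y$1^2 + y$2^2 + y$3^2) - ((lam$1*y$1)^2 + (lam$2*y$2)^2 + (lam$3*y$3)^2)"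
      by (simp add: sum_3 algebra_simps power_mult_distrib)
    then show ?thesis using n A_def by simp
  qed
  show ?thesis unfolding conc_pure_def Gf_def by (simp only: d e f)
qed

lemma G_jensen:
  assumes w1: "w \<le> 1" and lw: "\<forall>i. (lam$i)^2 \<le> w" and J: "finite J"
    and p: "\<forall>j\<in>J. 0 \<le> p j" and s: "(\<Sum>j\<in>J. p j) = 1"
  shows "Gf lam w (\<Sum>j\<in>J. p j *\<^sub>R y j) \<le> (\<Sum>j\<in>J. p j * Gf lam w (y j))"
proof -
  define V where "V z = (sqrt (1 - w), (\<chi> i. sqrt (w - (lam$i)^2) * z$i) :: real^3)" for z :: "real^3"
  have nV: "norm (V z) = Gf lam w z" for z
  proof -
    have a: "norm (sqrt (1 - w))^2 = (1 - w) * 1^2" using w1 by simp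
    have b: "norm ((\<chi> i. sqrt (w - (lam$i)^2) * z$i) :: real^3)^2 = (\<Sum>i\<in>UNIV. (w - (lam $ i)^2) * (z $ i)^2)"
      unfolding normsq_sum using lw by (simp add: power_mult_distrib)
    show ?thesis unfolding V_def norm_Pair a b Gf_def ..
  qed
  have dd: "(\<Sum>x\<in>J. p x * (c * y x $ i)) = c * (\<Sum>x\<in>J. p x * y x $ i)" for i c
    by (simp add: sum_distrib_left mult.left_commute)
  have sV: "(\<Sum>j\<in>J. p j *\<^sub>R V (y j)) = V (\<Sum>j\<in>J. p j *\<^sub>R y j)"
    by (simp add: V_def prod_eq_iff fst_sum snd_sum vec_eq_iff sum_component
        sum_distrib_right[symmetric] s dd)
  have "Gf lam w (\<Sum>j\<in>J. p j *\<^sub>R y j) = norm (\<Sum>j\<in>J. p j *\<^sub>R V (y j))" using sV nV by simp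
  also have "\<dots> \<le> (\<Sum>j\<in>J. norm (p j *\<^sub>R V (y j)))" by (rule norm_sum)
  also have "\<dots> = (\<Sum>j\<in>J. p j * Gf lam w (y j))"
    using p by (intro sum.cong) (simp_all add: nV)
  finally show ?thesis .
qed

lemma G_indep:
  assumes "(lam$k)^2 = w" "\<forall>i. i \<noteq> k \<longrightarrow> y$i = z$i"
  shows "Gf lam w y = Gf lam w z"
proof -
  have "(\<Sum>i\<in>UNIV. (w - (lam $ i)^2) * (y $ i)^2) = (\<Sum>i\<in>UNIV. (w - (lam $ i)^2) * (z $ i)^2)"
  proof (rule sum.cong)
    fix i show "(w - (lam $ i)^2) * (y $ i)^2 = (w - (lam $ i)^2) * (z $ i)^2"
      using assms by (cases "i = k") auto
  qed simp
  then show ?thesis unfolding Gf_def by simp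
qed

lemma norm1_of_sq: "norm (y::real^3)^2 = 1 \<Longrightarrow> norm y = 1"
  using norm_ge_zero[of y] by (auto simp: power2_eq_1_iff)

lemma decomp:
  fixes x :: "real^3"
  assumes "norm x \<le> 1" "norm x \<noteq> 1"
  shows "\<exists>yp ym p. 0 < p \<and> p < 1 \<and> norm yp = 1 \<and> norm ym = 1 \<and>
     (\<forall>i. i \<noteq> k \<longrightarrow> yp$i = x$i \<and> ym$i = x$i) \<and> x = p *\<^sub>R yp + (1-p) *\<^sub>R ym"
proof -
  define s where "s = norm x ^ 2"
  have "\<bar>norm x\<bar> < 1" using assms by simp
  then have s1: "s < 1" unfolding s_def by (simp only: abs_square_less_1)
  define r where "r = sqrt (1 - s + (x$k)^2)"
  have r2: "r^2 = 1 - s + (x$k)^2" unfolding r_def using s1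
    by (simp add: add_nonneg_nonneg)
  have xr: "\<bar>x$k\<bar> < r"
  proof -
    have "sqrt ((x$k)^2) < r" unfolding r_def using s1 by (intro real_sqrt_less_mono) simp
    then show ?thesis by simp
  qed
  have rpos: "0 < r" using xr by linarith
  define yp where "yp = (\<chi> i. if i = k then r else x$i)"
  define ym where "ym = (\<chi> i. if i = k then -r else x$i)"
  have nsq: "norm (\<chi> i. if i = k then t else x$i)^2 = 1" if "t^2 = r^2" for t
  proof -
    have "norm (\<chi> i. if i = k then t else x$i)^2
        = (\<Sum>i\<in>UNIV. (x$i)^2 + (if i = k then r^2 - (x$k)^2 else 0))"
      unfolding normsq_sum using that by (intro sum.cong) auto
    also have "\<dots> = s + (r^2 - (x$k)^2)" by (simp add: sum.distrib s_def normsq_sum)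
    finally show ?thesis using r2 by simp
  qed
  have nyp: "norm yp = 1" unfolding yp_def by (rule norm1_of_sq, rule nsq) simp
  have nym: "norm ym = 1" unfolding ym_def by (rule norm1_of_sq, rule nsq) simp
  define p where "p = (r + x$k) / (2*r)"
  have p0: "0 < p" unfolding p_def using xr rpos by (simp add: abs_less_iff)
  have p1: "p < 1" unfolding p_def using xr rpos by (simp add: abs_less_iff)
  have "x = p *\<^sub>R yp + (1-p) *\<^sub>R ym"
    unfolding vec_eq_iff yp_def ym_def p_def using rpos by (auto simp: field_simps)
  moreover have "\<forall>i. i \<noteq> k \<longrightarrow> yp$i = x$i \<and> ym$i = x$i" by (simp add: yp_def ym_def)
  ultimately show ?thesis using p0 p1 nyp nym by blast
qed

lemma conc_main:
  assumes w1: "w \<le> 1" and lw: "\<forall>i. (lam$i)^2 \<le> w" and k: "(lam$k)^2 = w" and x: "norm x \<le> 1"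
  shows "concurrence (phi lam) (bloch 1 x) = Gf lam w x \<and> Gf lam w x \<in> conc_values (phi lam) (bloch 1 x)"
proof -
  have mem: "Gf lam w x \<in> conc_values (phi lam) (bloch 1 x)"
  proof (cases "norm x = 1")
    case True
    have pu: "bloch 1 x \<in> pure_states" using True unfolding pure_states_def by blast
    show ?thesis unfolding conc_values_def mem_Collect_eq
      apply (rule exI[of _ "{0::nat}"], rule exI[of _ "\<lambda>_. 1"], rule exI[of _ "\<lambda>_. bloch 1 x"])
      using pu conc_pure_eq[OF True, of lam w] by simp
  next
    case False
    then obtain yp ym p where d: "0 < p" "p < 1" "norm yp = 1" "norm ym = 1"
      "\<forall>i. i \<noteq> k \<longrightarrow> yp$i = x$i \<and> ym$i = x$i" "x = p *\<^sub>R yp + (1-p) *\<^sub>R ym"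
      using decomp[OF x False, of k] by blast
    have pu: "bloch 1 yp \<in> pure_states" "bloch 1 ym \<in> pure_states"
      using d unfolding pure_states_def by blast+
    have g: "Gf lam w yp = Gf lam w x" "Gf lam w ym = Gf lam w x"
      using G_indep[OF k] d(5) by auto
    have val: "Gf lam w x = p * conc_pure (phi lam) (bloch 1 yp) + (1 - p) * conc_pure (phi lam) (bloch 1 ym)"
      using conc_pure_eq[OF d(3)] conc_pure_eq[OF d(4)] g by (simp add: algebra_simps)
    have rho: "bloch 1 x = p *\<^sub>R bloch 1 yp + (1 - p) *\<^sub>R bloch 1 ym"
      unfolding bloch_comb2 using d(6) by simp
    show ?thesis unfolding conc_values_def mem_Collect_eq
      apply (rule exI[of _ "{0::nat, 1}"], rule exI[of _ "\<lambda>j. if j = 0 then p else 1 - p"],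
             rule exI[of _ "\<lambda>j. if j = 0 then bloch 1 yp else bloch 1 ym"])
      using pu d(1,2) val rho by simp
  qed
  have low: "Gf lam w x \<le> v" if v: "v \<in> conc_values (phi lam) (bloch 1 x)" for v
  proof -
    obtain J p \<pi> where J: "v = (\<Sum>j\<in>J. p j * conc_pure (phi lam) (\<pi> j))" "finite (J::nat set)" "J \<noteq> {}"
      "\<forall>j\<in>J. 0 < p j \<and> \<pi> j \<in> pure_states" "(\<Sum>j\<in>J. p j) = 1" "bloch 1 x = (\<Sum>j\<in>J. p j *\<^sub>R \<pi> j)"
      using v unfolding conc_values_def by blast
    have "\<forall>j\<in>J. \<exists>y. \<pi> j = bloch 1 y \<and> norm y = 1" using J(4) unfolding pure_states_def by blast
    then obtain y where y: "\<forall>j\<in>J. \<pi> j = bloch 1 (y j) \<and> norm (y j) = 1" by metis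
    have "bloch 1 x = (\<Sum>j\<in>J. p j *\<^sub>R bloch 1 (y j))" using J(6) y by simp
    also have "\<dots> = bloch (\<Sum>j\<in>J. p j * 1) (\<Sum>j\<in>J. p j *\<^sub>R y j)" by (rule bloch_sum)
    finally have xe: "x = (\<Sum>j\<in>J. p j *\<^sub>R y j)" by (simp add: bloch_eq_iff)
    have ve: "v = (\<Sum>j\<in>J. p j * Gf lam w (y j))"
      unfolding J(1) using y conc_pure_eq by (intro sum.cong) auto
    show ?thesis unfolding xe ve
      by (rule G_jensen[OF w1 lw J(2)]) (use J in auto)
  qed
  have "concurrence (phi lam) (bloch 1 x) = Gf lam w x"
    unfolding concurrence_def by (rule cInf_eq_minimum[OF mem low])
  with mem show ?thesis by simp
qed

lemma flat:
  assumes w1: "w \<le> 1" and lw: "\<forall>i. (lam$i)^2 \<le> w" and k: "(lam$k)^2 = w"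
  shows "flat_roof (concurrence (phi lam))"
proof -
  define L where "L z = {bloch 1 y | y. norm y \<le> 1 \<and> (\<forall>i. i \<noteq> k \<longrightarrow> y$i = z$i)}" for z :: "real^3"
  define P where "P z = {bloch 1 y | y. norm y = 1 \<and> (\<forall>i. i \<noteq> k \<longrightarrow> y$i = z$i)}" for z :: "real^3"
  define F where "F = L ` {z. norm z \<le> 1}"
  have un: "\<Union>F = qubit_states"
  proof
    show "\<Union>F \<subseteq> qubit_states" unfolding F_def L_def qubit_states_def by blast
    show "qubit_states \<subseteq> \<Union>F"
    proof
      fix \<rho> assume "\<rho> \<in> qubit_states"
      then obtain x where x: "\<rho> = bloch 1 x" "norm x \<le> 1" unfolding qubit_states_def by blast
      then have "\<rho> \<in> L x" unfolding L_def by blast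
      then show "\<rho> \<in> \<Union>F" unfolding F_def using x by blast
    qed
  qed
  have Leq: "L a = L b" if "\<forall>i. i \<noteq> k \<longrightarrow> a$i = b$i" for a b
    unfolding L_def using that by metis
  have disj: "A \<inter> B = {}" if AB: "A \<in> F" "B \<in> F" "A \<noteq> B" for A B
  proof (rule ccontr)
    assume "A \<inter> B \<noteq> {}"
    then obtain \<rho> where r: "\<rho> \<in> A" "\<rho> \<in> B" by blast
    obtain a b where ab: "A = L a" "B = L b" using AB unfolding F_def by blast
    obtain y1 where y1: "\<rho> = bloch 1 y1" "\<forall>i. i \<noteq> k \<longrightarrow> y1$i = a$i" using r ab unfolding L_def by blast
    obtain y2 where y2: "\<rho> = bloch 1 y2" "\<forall>i. i \<noteq> k \<longrightarrow> y2$i = b$i" using r ab unfolding L_def by blast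
    have "y1 = y2" using y1 y2 by (simp add: bloch_eq_iff)
    then have "\<forall>i. i \<noteq> k \<longrightarrow> a$i = b$i" using y1 y2 by metis
    then have "A = B" using ab Leq by simp
    with AB show False by simp
  qed
  have hull: "L z = convex hull (P z)" for z
  proof
    have cv: "convex (L z)" unfolding convex_def
    proof (intro ballI allI impI)
      fix u v \<rho> \<sigma> assume h: "\<rho> \<in> L z" "\<sigma> \<in> L z" "0 \<le> u" "0 \<le> v" "u + v = (1::real)"
      obtain y1 where y1: "\<rho> = bloch 1 y1" "norm y1 \<le> 1" "\<forall>i. i \<noteq> k \<longrightarrow> y1$i = z$i" using h unfolding L_def by blast
      obtain y2 where y2: "\<sigma> = bloch 1 y2" "norm y2 \<le> 1" "\<forall>i. i \<noteq> k \<longrightarrow> y2$i = z$i" using h unfolding L_def by blast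
      have "norm (u *\<^sub>R y1 + v *\<^sub>R y2) \<le> u * norm y1 + v * norm y2"
        using h by (metis abs_of_nonneg norm_scaleR norm_triangle_ineq)
      also have "\<dots> \<le> u * 1 + v * 1" using h y1 y2 by (intro add_mono mult_left_mono) auto
      finally have n: "norm (u *\<^sub>R y1 + v *\<^sub>R y2) \<le> 1" using h by simp
      have "u *\<^sub>R \<rho> + v *\<^sub>R \<sigma> = bloch 1 (u *\<^sub>R y1 + v *\<^sub>R y2)"
        unfolding y1 y2 bloch_comb2 using h by simp
      moreover have "\<forall>i. i \<noteq> k \<longrightarrow> (u *\<^sub>R y1 + v *\<^sub>R y2)$i = z$i"
        using y1 y2 h by (simp add: algebra_simps flip: distrib_right)
      ultimately show "u *\<^sub>R \<rho> + v *\<^sub>R \<sigma> \<in> L z" using n unfolding L_def by blast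
    qed
    show "convex hull (P z) \<subseteq> L z"
      by (rule hull_minimal) (use cv in \<open>auto simp: P_def L_def\<close>)
    show "L z \<subseteq> convex hull (P z)"
    proof
      fix \<rho> assume "\<rho> \<in> L z"
      then obtain y where y: "\<rho> = bloch 1 y" "norm y \<le> 1" "\<forall>i. i \<noteq> k \<longrightarrow> y$i = z$i" unfolding L_def by blast
      show "\<rho> \<in> convex hull (P z)"
      proof (cases "norm y = 1")
        case True
        then have "\<rho> \<in> P z" using y unfolding P_def by blast
        then show ?thesis by (rule hull_inc)
      next
        case False
        then obtain yp ym p where d: "0 < p" "p < 1" "norm yp = 1" "norm ym = 1"
          "\<forall>i. i \<noteq> k \<longrightarrow> yp$i = y$i \<and> ym$i = y$i" "y = p *\<^sub>R yp + (1-p) *\<^sub>R ym"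
          using decomp[OF y(2) False, of k] by blast
        have "\<forall>i. i \<noteq> k \<longrightarrow> yp$i = z$i" "\<forall>i. i \<noteq> k \<longrightarrow> ym$i = z$i" using d(5) y(3) by auto
        then have "bloch 1 yp \<in> P z" "bloch 1 ym \<in> P z" using d(3,4) unfolding P_def by blast+
        then have "p *\<^sub>R bloch 1 yp + (1 - p) *\<^sub>R bloch 1 ym \<in> convex hull (P z)"
          using d by (intro convexD[OF convex_convex_hull]) (auto intro: hull_inc)
        moreover have "p *\<^sub>R bloch 1 yp + (1 - p) *\<^sub>R bloch 1 ym = \<rho>"
          unfolding bloch_comb2 y(1) using d(6) by simp
        ultimately show ?thesis by simp
      qed
    qed
  qed
  have const: "concurrence (phi lam) \<rho> = concurrence (phi lam) \<sigma>" if LL: "L0 \<in> F" "\<rho> \<in> L0" "\<sigma> \<in> L0" for L0 \<rho> \<sigma>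
  proof -
    obtain z where z: "L0 = L z" using LL unfolding F_def by blast
    have c: "concurrence (phi lam) \<rho> = Gf lam w z" if rL: "\<rho> \<in> L z" for \<rho>
    proof -
      obtain y where y: "\<rho> = bloch 1 y" "norm y \<le> 1" "\<forall>i. i \<noteq> k \<longrightarrow> y$i = z$i" using rL unfolding L_def by blast
      show ?thesis using conc_main[OF w1 lw k y(2)] G_indep[OF k y(3)] y(1) by simp
    qed
    show ?thesis using c LL z by simp
  qed
  show ?thesis unfolding flat_roof_def
  proof (intro exI[of _ F] conjI ballI impI)
    show "\<Union>F = qubit_states" by (rule un)
  next
    fix A B assume "A \<in> F" "B \<in> F" "A \<noteq> B" then show "A \<inter> B = {}" by (rule disj)
  next
    fix L0 assume h: "L0 \<in> F"
    then obtain z where z: "L0 = L z" unfolding F_def by blast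
    have "P z \<subseteq> pure_states" unfolding P_def pure_states_def by blast
    then show "\<exists>P. P \<subseteq> pure_states \<and> L0 = convex hull P" using hull z by blast
  next
    fix L0 \<rho> \<sigma> assume "L0 \<in> F" "\<rho> \<in> L0" "\<sigma> \<in> L0"
    then show "concurrence (phi lam) \<rho> = concurrence (phi lam) \<sigma>" by (rule const)
  qed
qed


theorem mainTheorem4:
  fixes lam :: "real^3" and x :: "real^3"
  assumes "positive_map (phi lam)"
    and "norm x \<le> 1"
  defines "w \<equiv> Max {(lam $ i)^2 | i. i \<in> (UNIV :: 3 set)}"
  shows "concurrence (phi lam) (bloch 1 x)
           = sqrt ((1 - w) * 1^2 + (\<Sum>i\<in>UNIV. (w - (lam $ i)^2) * (x $ i)^2))
       \<and> concurrence (phi lam) (bloch 1 x) \<in> conc_values (phi lam) (bloch 1 x)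
       \<and> flat_roof (concurrence (phi lam))"
proof -
  have W: "{(lam $ i)^2 | i. i \<in> (UNIV :: 3 set)} = (\<lambda>i. (lam $ i)^2) ` UNIV" by auto
  have fin: "finite {(lam $ i)^2 | i. i \<in> (UNIV :: 3 set)}" unfolding W by simp
  have ne: "{(lam $ i)^2 | i. i \<in> (UNIV :: 3 set)} \<noteq> {}" by auto
  have "w \<in> {(lam $ i)^2 | i. i \<in> (UNIV :: 3 set)}" unfolding w_def by (rule Max_in[OF fin ne])
  then obtain k where k: "(lam$k)^2 = w" by auto
  have lw: "\<forall>i. (lam$i)^2 \<le> w" unfolding w_def using fin by (auto intro: Max_ge)
  have w1: "w \<le> 1" using lam_le1[OF assms(1), of k] k by simp
  show ?thesis using conc_main[OF w1 lw k assms(2)] flat[OF w1 lw k] unfolding Gf_def by simp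
qed

end
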